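(* Let $N$ denote the smallest $k\ge 1$ such that $w_1$ and $w_{k+1}$ belong to the same class. Then for each $1\le i\le M$, $$E\left(h_{N-1}\mid w_1\in C_i\right)=-\log(p_i),$$ and consequently $\hat H_2=h_{N-1}$ is an unbiased estimator of the Shannon entropy: $$E(h_{N-1})=-\sum_{i=1}^M p_i\log(p_i).$$
   Context: Let $w_1,w_2,\dots$ be an infinite sequence of independent, identically distributed samples. Each sample belongs to exactly one of $M$ classes $C_1,\dots,C_M$, and $\Pr(w_k\in C_i)=p_i$, where $0<p_i\le 1$ and $\sum_{i=1}^M p_i=1$. The logarithm is the natural logarithm. The harmonic numbers are $h_n=\sum_{k=1}^n 1/k$ for $n\ge 1$, with $h_0=0$. *)

theory Defs
  imports "HOL-Probability.Probability"
begin

definition cond_exp_event :: "'a measure \<Rightarrow> ('a \<Rightarrow> real) \<Rightarrow> 'a set \<Rightarrow> real" where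
  "cond_exp_event M X A = (\<integral>x. indicator A x * X x \<partial>M) / measure M A"

definition first_return :: "nat \<Rightarrow> (nat \<Rightarrow> 'b set) \<Rightarrow> (nat \<Rightarrow> 'a \<Rightarrow> 'b) \<Rightarrow> 'a \<Rightarrow> nat" where
  "first_return m C w x = (LEAST k. k \<ge> 1 \<and> (\<exists>i\<in>{1..m}. w 1 x \<in> C i \<and> w (k+1) x \<in> C i))"

end

theory Submission imports Defs begin

lemma harm_series:
  fixes x :: real
  assumes x0: "0 \<le> x" and x1: "x < 1"
  shows "(\<lambda>k. harm k * x ^ k) sums (- ln (1 - x) / (1 - x))"
proof -
  define a where "a = (\<lambda>i::nat. x ^ i / real i)"
  define b where "b = (\<lambda>i::nat. x ^ i)"
  have as: "a sums (- ln (1 - x))"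
  proof -
    have "(\<lambda>n. - ((-(-x))^n) / of_nat n) sums ln (1 + (-x))"
      by (rule ln_series') (use x0 x1 in auto)
    hence "(\<lambda>n. - (x^n / real n)) sums ln (1 - x)" by simp
    hence "(\<lambda>n. - (- (x^n / real n))) sums (- ln (1 - x))" by (rule sums_minus)
    thus ?thesis by (simp add: a_def)
  qed
  have bs: "b sums (1 / (1 - x))"
    unfolding b_def by (rule geometric_sums) (use x0 x1 in auto)
  have na: "summable (\<lambda>k. norm (a k))"
    using sums_summable[OF as] x0 by (simp add: a_def)
  have nb: "summable (\<lambda>k. norm (b k))"
    using sums_summable[OF bs] x0 by (simp add: b_def)
  have cp: "(\<lambda>k. \<Sum>i\<le>k. a i * b (k - i)) sums ((\<Sum>k. a k) * (\<Sum>k. b k))"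
    by (rule Cauchy_product_sums[OF na nb])
  have eq: "(\<Sum>i\<le>k. a i * b (k - i)) = harm k * x ^ k" for k
  proof -
    have "(\<Sum>i\<le>k. a i * b (k - i)) = (\<Sum>i\<le>k. inverse (real i) * x ^ k)"
      by (rule sum.cong) (auto simp: a_def b_def divide_inverse power_add[symmetric])
    also have "\<dots> = (\<Sum>i\<le>k. inverse (real i)) * x ^ k" by (simp add: sum_distrib_right)
    also have "(\<Sum>i\<le>k. inverse (real i)) = harm k"
    proof -
      have "{..k} = insert 0 {1..k}" by auto
      thus ?thesis by (simp add: harm_def)
    qed
    finally show ?thesis .
  qed
  have "(\<Sum>k. a k) * (\<Sum>k. b k) = - ln (1 - x) / (1 - x)"
    by (simp add: sums_unique[OF as, symmetric] sums_unique[OF bs, symmetric])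
  with cp eq show ?thesis by simp
qed

theorem mainTheorem2:
  fixes M :: "'a measure" and S :: "'b measure"
    and w :: "nat \<Rightarrow> 'a \<Rightarrow> 'b"
    and m :: nat and C :: "nat \<Rightarrow> 'b set" and p :: "nat \<Rightarrow> real"
  assumes "prob_space M"
    and meas: "\<And>k. k \<ge> 1 \<Longrightarrow> w k \<in> measurable M S"
    and indep: "prob_space.indep_vars M (\<lambda>_. S) w {1..}"
    and iid: "\<And>k. k \<ge> 1 \<Longrightarrow> distr M S (w k) = distr M S (w 1)"
    and m_pos: "m \<ge> 1"
    and C_sets: "\<And>i. i \<in> {1..m} \<Longrightarrow> C i \<in> sets S"
    and C_part: "\<And>y. y \<in> space S \<Longrightarrow> \<exists>!i. i \<in> {1..m} \<and> y \<in> C i"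
    and p_def: "\<And>i. i \<in> {1..m} \<Longrightarrow> measure M {x \<in> space M. w 1 x \<in> C i} = p i"
    and p_pos: "\<And>i. i \<in> {1..m} \<Longrightarrow> 0 < p i \<and> p i \<le> 1"
    and p_sum: "(\<Sum>i=1..m. p i) = 1"
  shows "integrable M (\<lambda>x. harm (first_return m C w x - 1) :: real)
    \<and> (\<forall>i\<in>{1..m}. cond_exp_event M (\<lambda>x. harm (first_return m C w x - 1))
                     {x \<in> space M. w 1 x \<in> C i} = - ln (p i))
    \<and> (\<integral>x. harm (first_return m C w x - 1) \<partial>M) = - (\<Sum>i=1..m. p i * ln (p i))"
proof -
  interpret prob_space M by fact
  define N where "N = first_return m C w"
  define A where "A = (\<lambda>i. {x \<in> space M. w 1 x \<in> C i})"
  define F where "F = (\<lambda>i n. {x \<in> space M. w 1 x \<in> C i \<and> (\<forall>j\<in>{2..Suc n}. w j x \<notin> C i)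
                                \<and> w (Suc (Suc n)) x \<in> C i})"
  define g where "g = (\<lambda>i x. indicator (A i) x * harm (N x - 1) :: real)"
  have wS: "w j x \<in> space S" if "j \<ge> 1" "x \<in> space M" for j x
    using measurable_space[OF meas[OF that(1)] that(2)] .
  have pj: "prob (w j -` C i \<inter> space M) = p i" if "j \<ge> 1" "i \<in> {1..m}" for i j
  proof -
    have "prob (w j -` C i \<inter> space M) = measure (distr M S (w j)) (C i)"
      using that by (simp add: measure_distr meas C_sets)
    also have "\<dots> = measure (distr M S (w 1)) (C i)" by (simp only: iid[OF that(1)])
    also have "\<dots> = prob (w 1 -` C i \<inter> space M)"
      using that by (simp add: measure_distr meas C_sets)
    also have "w 1 -` C i \<inter> space M = {x \<in> space M. w 1 x \<in> C i}" by auto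
    finally show ?thesis using p_def that by simp
  qed
  have pjc: "prob (w j -` (space S - C i) \<inter> space M) = 1 - p i" if "j \<ge> 1" "i \<in> {1..m}" for i j
  proof -
    have "w j -` (space S - C i) \<inter> space M = space M - (w j -` C i \<inter> space M)"
      using wS that by auto
    moreover have "w j -` C i \<inter> space M \<in> events"
      using meas that C_sets measurable_sets by blast
    ultimately show ?thesis using prob_compl pj that by simp
  qed
  have F_int: "F i n = (\<Inter>j\<in>{1..Suc (Suc n)}. w j -` (if j = 1 \<or> j = Suc (Suc n) then C i else space S - C i) \<inter> space M)"
    for i n
  proof (intro set_eqI iffI)
    fix x assume "x \<in> F i n" then show "x \<in> (\<Inter>j\<in>{1..Suc (Suc n)}. w j -` (if j = 1 \<or> j = Suc (Suc n) then C i else space S - C i) \<inter> space M)"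
      using wS by (auto simp: F_def)
  next
    fix x assume x: "x \<in> (\<Inter>j\<in>{1..Suc (Suc n)}. w j -` (if j = 1 \<or> j = Suc (Suc n) then C i else space S - C i) \<inter> space M)"
    have xj: "x \<in> w j -` (if j = 1 \<or> j = Suc (Suc n) then C i else space S - C i) \<inter> space M"
      if "j \<in> {1..Suc (Suc n)}" for j
      using x that by blast
    have "x \<in> space M" "w 1 x \<in> C i" using xj[of 1] by auto
    moreover have "w (Suc (Suc n)) x \<in> C i" using xj[of "Suc (Suc n)"] by auto
    moreover have "\<forall>j\<in>{2..Suc n}. w j x \<notin> C i"
    proof
      fix j assume "j \<in> {2..Suc n}" then show "w j x \<notin> C i" using xj[of j] by auto
    qed
    ultimately show "x \<in> F i n" by (auto simp: F_def)
  qed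
  have F_sets: "F i n \<in> events" if "i \<in> {1..m}" for i n
    unfolding F_int
    by (rule sets.finite_INT) (use meas C_sets that measurable_sets in auto)
  have F_prob: "prob (F i n) = p i ^ 2 * (1 - p i) ^ n" if "i \<in> {1..m}" for i n
  proof -
    let ?B = "\<lambda>j. if j = 1 \<or> j = Suc (Suc n) then C i else space S - C i"
    have "prob (F i n) = (\<Prod>j\<in>{1..Suc (Suc n)}. prob (w j -` ?B j \<inter> space M))"
      unfolding F_int
      by (rule indep_varsD[OF indep]) (use C_sets that in auto)
    also have "\<dots> = (\<Prod>j\<in>{1..Suc (Suc n)}. if j = 1 \<or> j = Suc (Suc n) then p i else 1 - p i)"
      by (rule prod.cong) (use pj pjc that in auto)
    also have "{1..Suc (Suc n)} = insert 1 (insert (Suc (Suc n)) {2..Suc n})" by auto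
    also have "(\<Prod>j\<in>insert 1 (insert (Suc (Suc n)) {2..Suc n}). if j = 1 \<or> j = Suc (Suc n) then p i else 1 - p i)
       = p i * p i * (\<Prod>j\<in>{2..Suc n}. 1 - p i)"
      by (subst prod.insert; simp)+
    also have "\<dots> = p i ^ 2 * (1 - p i) ^ n" by (simp add: power2_eq_square)
    finally show ?thesis .
  qed
  have N_F: "N x = Suc n" if "x \<in> F i n" "i \<in> {1..m}" for x i n
    unfolding N_def first_return_def
  proof (rule Least_equality)
    show "1 \<le> Suc n \<and> (\<exists>i\<in>{1..m}. w 1 x \<in> C i \<and> w (Suc n + 1) x \<in> C i)"
      using that by (auto simp: F_def)
  next
    fix y assume y: "1 \<le> y \<and> (\<exists>i\<in>{1..m}. w 1 x \<in> C i \<and> w (y + 1) x \<in> C i)"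
    show "Suc n \<le> y"
    proof (rule ccontr)
      assume "\<not> Suc n \<le> y"
      from y obtain i' where i': "i' \<in> {1..m}" "w 1 x \<in> C i'" "w (y+1) x \<in> C i'" by auto
      have xs: "x \<in> space M" "w 1 x \<in> C i" using that by (auto simp: F_def)
      have "i' = i" using C_part[OF wS[OF _ xs(1), of 1]] i' xs that by auto
      then show False using i' that y \<open>\<not> Suc n \<le> y\<close> by (auto simp: F_def)
    qed
  qed
  have A_eq: "A i = w 1 -` C i \<inter> space M" for i unfolding A_def by auto
  have A_sets: "A i \<in> events" if "i \<in> {1..m}" for i
    unfolding A_eq using meas[of 1] C_sets[OF that] measurable_sets by auto
  have F_sub: "F i n \<subseteq> A i" for i n unfolding F_def A_def by auto
  have F_disj: "disjoint_family (F i)" if "i \<in> {1..m}" for i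
    unfolding disjoint_family_on_def
  proof (intro ballI impI)
    fix a b :: nat assume "a \<noteq> b"
    show "F i a \<inter> F i b = {}"
    proof (rule ccontr)
      assume "F i a \<inter> F i b \<noteq> {}"
      then obtain x where xa: "x \<in> F i a" and xb: "x \<in> F i b" by auto
      have "N x = Suc a" using N_F[OF xa that] .
      moreover have "N x = Suc b" using N_F[OF xb that] .
      ultimately show False using \<open>a \<noteq> b\<close> by simp
    qed
  qed
  have N_meas[measurable]: "N \<in> M \<rightarrow>\<^sub>M count_space UNIV"
    unfolding N_def first_return_def
  proof (rule measurable_Least)
    fix k :: nat
    show "(\<lambda>x. 1 \<le> k \<and> (\<exists>i\<in>{1..m}. w 1 x \<in> C i \<and> w (k + 1) x \<in> C i)) \<in> M \<rightarrow>\<^sub>M count_space UNIV"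
    proof (cases "k = 0")
      case True then show ?thesis by (simp only: pred_def) simp
    next
      case False
      have "{x \<in> space M. 1 \<le> k \<and> (\<exists>i\<in>{1..m}. w 1 x \<in> C i \<and> w (k + 1) x \<in> C i)}
          = (\<Union>i\<in>{1..m}. (w 1 -` C i \<inter> space M) \<inter> (w (k+1) -` C i \<inter> space M))"
        using False by auto
      also have "\<dots> \<in> events"
      proof (rule sets.finite_UN)
        fix i assume i: "i \<in> {1..m}"
        have m1: "w 1 \<in> M \<rightarrow>\<^sub>M S" by (rule meas) simp
        have m2: "w (k+1) \<in> M \<rightarrow>\<^sub>M S" by (rule meas) simp
        show "(w 1 -` C i \<inter> space M) \<inter> (w (k+1) -` C i \<inter> space M) \<in> events"
          by (rule sets.Int; rule measurable_sets; rule m1 m2 C_sets[OF i])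
      qed simp
      finally show ?thesis by (simp only: pred_def)
    qed
  qed
  have g_meas[measurable]: "g i \<in> borel_measurable M" if "i \<in> {1..m}" for i
  proof -
    have [measurable]: "A i \<in> sets M" using A_sets[OF that] .
    show ?thesis unfolding g_def by measurable
  qed
  have g_nn: "(\<integral>\<^sup>+x. ennreal (g i x) \<partial>M) = ennreal (- p i * ln (p i))" if i: "i \<in> {1..m}" for i
  proof -
    have p0: "0 < p i" and p1: "p i \<le> 1" using p_pos[OF i] by auto
    have Fs[measurable]: "F i n \<in> sets M" for n using F_sets[OF i] .
    have geo: "(\<lambda>n. p i ^ 2 * (1 - p i) ^ n) sums (p i ^ 2 * (1 / (1 - (1 - p i))))"
      by (intro sums_mult geometric_sums) (use p0 p1 in auto)
    have U: "(\<lambda>n. measure M (F i n)) sums measure M (\<Union>n. F i n)"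
      by (rule measure_UNION) (use F_disj[OF i] in \<open>auto simp: emeasure_eq_measure\<close>)
    have "measure M (\<Union>n. F i n) = p i"
    proof -
      have "(\<lambda>n. measure M (F i n)) = (\<lambda>n. p i ^ 2 * (1 - p i) ^ n)"
        using F_prob[OF i] by auto
      with U geo have "measure M (\<Union>n. F i n) = p i ^ 2 * (1 / (1 - (1 - p i)))"
        using sums_unique2 by metis
      also have "\<dots> = p i" using p0 by (simp add: power2_eq_square)
      finally show ?thesis .
    qed
    moreover have "measure M (A i) = p i" using p_def[OF i] by (simp add: A_def)
    moreover have "(\<Union>n. F i n) \<subseteq> A i" using F_sub by auto
    moreover have "(\<Union>n. F i n) \<in> events" by measurable
    ultimately have "measure M (A i - (\<Union>n. F i n)) = 0"
      using finite_measure_Diff A_sets[OF i] by simp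
    then have null: "A i - (\<Union>n. F i n) \<in> null_sets M"
      using A_sets[OF i] \<open>(\<Union>n. F i n) \<in> events\<close>
      by (intro null_setsI) (auto simp: emeasure_eq_measure)
    have AE: "AE x in M. x \<in> A i \<longrightarrow> (\<exists>n. x \<in> F i n)"
      by (rule AE_I'[OF null]) auto
    have "AE x in M. ennreal (g i x) = (\<Sum>n. ennreal (harm n) * indicator (F i n) x)"
      using AE
    proof eventually_elim
      case (elim x)
      show ?case
      proof (cases "x \<in> A i")
        case True
        then obtain n0 where n0: "x \<in> F i n0" using elim by auto
        have ind: "indicator (F i n) x = (if n = n0 then 1 else 0 :: ennreal)" for n
          using F_disj[OF i] n0 unfolding disjoint_family_on_def
          by (auto simp: indicator_def)
        have "(\<Sum>n. ennreal (harm n) * indicator (F i n) x) = (\<Sum>n\<in>{n0}. ennreal (harm n) * indicator (F i n) x)"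
          by (rule suminf_finite) (auto simp: ind)
        also have "\<dots> = ennreal (harm n0)" using n0 by simp
        also have "harm n0 = g i x" using N_F[OF n0 i] True by (simp add: g_def)
        finally show ?thesis by simp
      next
        case False
        then have "x \<notin> F i n" for n using F_sub by auto
        then show ?thesis using False by (simp add: g_def)
      qed
    qed
    then have "(\<integral>\<^sup>+x. ennreal (g i x) \<partial>M) = (\<integral>\<^sup>+x. (\<Sum>n. ennreal (harm n) * indicator (F i n) x) \<partial>M)"
      by (rule nn_integral_cong_AE)
    also have "\<dots> = (\<Sum>n. \<integral>\<^sup>+x. ennreal (harm n) * indicator (F i n) x \<partial>M)"
      by (rule nn_integral_suminf) measurable
    also have "\<dots> = (\<Sum>n. ennreal (harm n * (p i ^ 2 * (1 - p i) ^ n)))"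
      by (simp add: nn_integral_cmult_indicator emeasure_eq_measure F_prob[OF i] ennreal_mult harm_nonneg p0 p1)
    also have "\<dots> = ennreal (\<Sum>n. harm n * (p i ^ 2 * (1 - p i) ^ n))"
    proof (rule suminf_ennreal2)
      show "0 \<le> harm n * (p i ^ 2 * (1 - p i) ^ n)" for n
        using p1 by (simp add: harm_nonneg)
      have "(\<lambda>n. p i ^ 2 * (harm n * (1 - p i) ^ n)) sums (p i ^ 2 * (- ln (1 - (1 - p i)) / (1 - (1 - p i))))"
        by (intro sums_mult harm_series) (use p0 p1 in auto)
      then show "summable (\<lambda>n. harm n * (p i ^ 2 * (1 - p i) ^ n))"
        by (simp add: sums_summable mult_ac)
    qed
    also have "(\<Sum>n. harm n * (p i ^ 2 * (1 - p i) ^ n)) = - p i * ln (p i)"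
    proof -
      have "(\<lambda>n. p i ^ 2 * (harm n * (1 - p i) ^ n)) sums (p i ^ 2 * (- ln (1 - (1 - p i)) / (1 - (1 - p i))))"
        by (intro sums_mult harm_series) (use p0 p1 in auto)
      then have "(\<lambda>n. harm n * (p i ^ 2 * (1 - p i) ^ n)) sums (- p i * ln (p i))"
        using p0 by (simp add: mult_ac power2_eq_square)
      then show ?thesis by (rule sums_unique[symmetric])
    qed
    finally show ?thesis .
  qed
  have g_int: "integrable M (g i) \<and> integral\<^sup>L M (g i) = - p i * ln (p i)" if i: "i \<in> {1..m}" for i
  proof -
    have p0: "0 < p i" and p1: "p i \<le> 1" using p_pos[OF i] by auto
    have "0 \<le> - p i * ln (p i)" using p0 p1 by (simp add: mult_nonneg_nonpos)
    then show ?thesis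
      using nn_integral_eq_integrable[of "g i" M "- p i * ln (p i)"] g_nn[OF i] g_meas[OF i]
      by (simp add: g_def harm_nonneg)
  qed
  have sum_g: "harm (N x - 1) = (\<Sum>i\<in>{1..m}. g i x)" if x: "x \<in> space M" for x
  proof -
    obtain i0 where i0: "i0 \<in> {1..m}" "w 1 x \<in> C i0" using C_part[OF wS[OF _ x, of 1]] by auto
    have "g i x = (if i = i0 then harm (N x - 1) else 0)" if "i \<in> {1..m}" for i
    proof -
      have uq: "i' = i0" if "i' \<in> {1..m}" "w 1 x \<in> C i'" for i'
        using C_part[OF wS[OF _ x, of 1]] i0 that by blast
      show ?thesis
      proof (cases "i = i0")
        case True then show ?thesis using i0 x by (simp add: g_def A_def)
      next
        case False
        then have "w 1 x \<notin> C i" using uq that by blast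
        then show ?thesis using False by (simp add: g_def A_def)
      qed
    qed
    then have "(\<Sum>i\<in>{1..m}. g i x) = (\<Sum>i\<in>{1..m}. if i = i0 then harm (N x - 1) else 0)"
      by (intro sum.cong) auto
    also have "\<dots> = harm (N x - 1)" using i0 by simp
    finally show ?thesis by simp
  qed
  have int_all: "integrable M (\<lambda>x. \<Sum>i\<in>{1..m}. g i x)"
    by (rule Bochner_Integration.integrable_sum) (use g_int in blast)
  have I1: "integrable M (\<lambda>x. harm (N x - 1) :: real)"
  proof -
    have "integrable M (\<lambda>x. harm (N x - 1) :: real) \<longleftrightarrow> integrable M (\<lambda>x. \<Sum>i\<in>{1..m}. g i x)"
      by (rule Bochner_Integration.integrable_cong[OF refl]) (rule sum_g)
    with int_all show ?thesis by simp
  qed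
  have I3: "(\<integral>x. harm (N x - 1) \<partial>M) = - (\<Sum>i=1..m. p i * ln (p i))"
  proof -
    have "(\<integral>x. harm (N x - 1) \<partial>M) = (\<integral>x. (\<Sum>i\<in>{1..m}. g i x) \<partial>M)"
      by (rule Bochner_Integration.integral_cong[OF refl]) (rule sum_g)
    also have "\<dots> = (\<Sum>i\<in>{1..m}. integral\<^sup>L M (g i))"
      by (rule Bochner_Integration.integral_sum) (use g_int in blast)
    also have "\<dots> = (\<Sum>i\<in>{1..m}. - (p i * ln (p i)))"
      using g_int by (intro sum.cong) auto
    finally show ?thesis by (simp add: sum_negf)
  qed
  have I2: "cond_exp_event M (\<lambda>x. harm (N x - 1)) (A i) = - ln (p i)" if i: "i \<in> {1..m}" for i
  proof -
    have "measure M (A i) = p i" using p_def[OF i] by (simp add: A_def)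
    moreover have "(\<integral>x. indicator (A i) x * harm (N x - 1) \<partial>M) = - p i * ln (p i)"
      using g_int[OF i] by (simp add: g_def)
    ultimately show ?thesis using p_pos[OF i] by (simp add: cond_exp_event_def)
  qed
  show ?thesis using I1 I2 I3 unfolding N_def A_def by auto
qed

end
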